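(* Every rectangular permutation $\pi$ can be expressed uniquely as $\pi=\psi_{x_m}\circ\cdots\circ\psi_{x_1}(e_0)$ for some $m\ge0$ and letters $x_1,\dots,x_m\in\{1,2,u,d\}$, where each operator $\psi_{x_j}$ is applied to a permutation in its domain.
   Context: A permutation is rectangular if it avoids the patterns $2413,2431,4213,4231$; $e_0$ is the empty permutation (size $0$). For $\pi\in S_n$ (one-line form) and $1\le i,j\le n+1$, $\rho_{i,j}(\pi)\in S_{n+1}$ is obtained by increasing by $1$ every entry $\ge i$ and inserting the value $i$ at position $j$. Operators: $\psi_1=\rho_{1,1}$, domain all rectangular permutations (including $e_0$); $\psi_2=\rho_{1,2}$, domain rectangular $\pi$ of size $\ge1$ with $\pi_1\ne1$; $\psi_u(\pi)=\rho_{\pi_1,1}(\pi)$, same domain as $\psi_2$; $\psi_d(\pi)=\rho_{\pi_1+1,1}(\pi)$, domain rectangular $\pi$ of size $\ge1$. *)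

theory Defs
  imports Main
begin

(* Permutations of size n in one-line form: lists of length n whose entries are
   exactly 1..n (values are 1-indexed, as in the paper). The empty list is e_0. *)
definition is_perm :: "nat list \<Rightarrow> bool" where
  "is_perm p \<longleftrightarrow> distinct p \<and> set p = {1..length p}"

definition contains :: "nat list \<Rightarrow> nat list \<Rightarrow> bool" where
  "contains p q \<longleftrightarrow>
     (\<exists>is. length is = length q \<and> sorted_wrt (<) is \<and> (\<forall>i\<in>set is. i < length p) \<and>
        (\<forall>a<length q. \<forall>b<length q. (p ! (is ! a) < p ! (is ! b)) \<longleftrightarrow> (q ! a < q ! b)))"

definition avoids :: "nat list \<Rightarrow> nat list \<Rightarrow> bool" where
  "avoids p q \<longleftrightarrow> \<not> contains p q"

definition rectangular :: "nat list \<Rightarrow> bool" where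
  "rectangular p \<longleftrightarrow> is_perm p \<and> avoids p [2,4,1,3] \<and> avoids p [2,4,3,1]
      \<and> avoids p [4,2,1,3] \<and> avoids p [4,2,3,1]"

definition rho :: "nat \<Rightarrow> nat \<Rightarrow> nat list \<Rightarrow> nat list" where
  "rho i j p = (let p' = map (\<lambda>x. if x \<ge> i then x + 1 else x) p
                in take (j - 1) p' @ [i] @ drop (j - 1) p')"

datatype letter = L1 | L2 | Lu | Ld

fun psi :: "letter \<Rightarrow> nat list \<Rightarrow> nat list option" where
  "psi L1 p = (if rectangular p then Some (rho 1 1 p) else None)"
| "psi L2 p = (if rectangular p \<and> p \<noteq> [] \<and> hd p \<noteq> 1 then Some (rho 1 2 p) else None)"
| "psi Lu p = (if rectangular p \<and> p \<noteq> [] \<and> hd p \<noteq> 1 then Some (rho (hd p) 1 p) else None)"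
| "psi Ld p = (if rectangular p \<and> p \<noteq> [] then Some (rho (hd p + 1) 1 p) else None)"

(* run [x_1,...,x_m] = psi_{x_m} o ... o psi_{x_1} (e_0), requiring each step to be in
   the domain of the operator applied *)
definition run :: "letter list \<Rightarrow> nat list option" where
  "run xs = foldl (\<lambda>acc x. Option.bind acc (psi x)) (Some []) xs"

end

theory Submission
  imports Defs
begin

definition rm :: "nat \<Rightarrow> nat list \<Rightarrow> nat list" where
  "rm k xs = take k xs @ drop (Suc k) xs"

definition fdn :: "nat \<Rightarrow> nat \<Rightarrow> nat" where
  "fdn v x = (if x > v then x - 1 else x)"

definition unsh :: "nat \<Rightarrow> nat list \<Rightarrow> nat list" where
  "unsh v xs = map (fdn v) xs"

definition shf :: "nat \<Rightarrow> nat \<Rightarrow> nat" where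
  "shf i x = (if x \<ge> i then x + 1 else x)"

lemma rho_eq: "rho i j p = take (j - 1) (map (shf i) p) @ [i] @ drop (j - 1) (map (shf i) p)"
  unfolding rho_def shf_def Let_def by simp

lemma unsh_shf: "unsh i (map (shf i) p) = p"
  unfolding unsh_def shf_def fdn_def by (induction p) auto

lemma shf_unsh: "v \<notin> set xs \<Longrightarrow> map (shf v) (unsh v xs) = xs"
  unfolding unsh_def shf_def fdn_def by (induction xs) auto

lemma perm_nz: "is_perm p \<Longrightarrow> x \<in> set p \<Longrightarrow> x \<ge> 1 \<and> x \<le> length p"
  unfolding is_perm_def by auto

lemma rect_perm: "rectangular p \<Longrightarrow> is_perm p"
  unfolding rectangular_def by simp

definition dec :: "nat list \<Rightarrow> letter \<times> nat list" where
  "dec s = (if hd s = 1 then (L1, unsh 1 (tl s))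
            else if s!1 = hd s + 1 then (Lu, unsh (hd s) (tl s))
            else if s!1 + 1 = hd s then (Ld, unsh (hd s) (tl s))
            else (L2, unsh 1 (hd s # drop 2 s)))"

lemma dec_psi:
  assumes "psi x p = Some s"
  shows "dec s = (x, p)"
proof (cases x)
  case L1
  then have "s = 1 # map (shf 1) p" using assms by (auto simp: rho_eq split: if_splits)
  then show ?thesis using L1 by (simp add: dec_def unsh_shf)
next
  case L2
  then obtain a p0 where p: "p = a # p0" "a \<noteq> 1" "rectangular p"
    using assms by (cases p) (auto split: if_splits)
  then have "a \<noteq> 0" using perm_nz[OF rect_perm[OF p(3)], of a] by auto
  then have a2: "a \<ge> 2" using p(2) by simp
  have s: "s = (a + 1) # 1 # map (shf 1) p0" using assms L2 p a2
    by (auto simp: rho_eq shf_def split: if_splits)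
  have "unsh 1 (hd s # drop 2 s) = unsh 1 (map (shf 1) p)" using s p a2 by (simp add: shf_def)
  then show ?thesis using L2 s a2 by (simp add: dec_def unsh_shf)
next
  case Lu
  then obtain a p0 where p: "p = a # p0" "a \<noteq> 1" "rectangular p"
    using assms by (cases p) (auto split: if_splits)
  then have "a \<noteq> 0" using perm_nz[OF rect_perm[OF p(3)], of a] by auto
  have s: "s = a # map (shf a) p" using assms Lu p
    by (auto simp: rho_eq split: if_splits)
  have t: "unsh a (tl s) = p" by (simp only: s list.sel unsh_shf)
  have "s ! 1 = a + 1" using p s by (simp add: shf_def)
  then show ?thesis using Lu s p t by (simp add: dec_def)
next
  case Ld
  then obtain a p0 where p: "p = a # p0" "rectangular p"
    using assms by (cases p) (auto split: if_splits)
  then have a0: "a \<noteq> 0" using perm_nz[OF rect_perm[OF p(2)], of a] by auto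
  have "psi Ld p = Some (rho (a+1) 1 p)" using p by simp
  then have "s = rho (a+1) 1 p" using assms Ld by simp
  then have s: "s = (a+1) # map (shf (a+1)) p" by (simp add: rho_eq)
  have t: "unsh (a+1) (tl s) = p" by (simp only: s list.sel unsh_shf)
  have "s ! 1 = a" using p s by (simp add: shf_def)
  then show ?thesis using Ld s p a0 t by (simp add: dec_def)
qed

lemma run_snoc: "run (xs @ [x]) = Option.bind (run xs) (psi x)"
  unfolding run_def by simp

lemma psi_nonempty: "psi x p = Some s \<Longrightarrow> s \<noteq> []"
  by (cases x) (auto simp: rho_eq split: if_splits)

lemma run_Nil: "run [] = Some []"
  unfolding run_def by simp

lemma run_unique: "run xs = Some s \<Longrightarrow> run ys = Some s \<Longrightarrow> xs = ys"
proof (induction xs arbitrary: ys s rule: rev_induct)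
  case Nil
  then have s: "s = []" by (simp add: run_Nil)
  show ?case
  proof (cases ys rule: rev_cases)
    case (snoc ys' y)
    show ?thesis
    proof (cases "run ys'")
      case None
      then show ?thesis using Nil(2) snoc by (simp add: run_snoc)
    next
      case (Some q)
      then have "psi y q = Some s" using Nil(2) snoc by (simp add: run_snoc)
      then show ?thesis using s psi_nonempty by blast
    qed
  qed simp
next
  case (snoc x xs)
  obtain p where p: "run xs = Some p" "psi x p = Some s"
  proof (cases "run xs")
    case None
    then show ?thesis using snoc.prems(1) by (simp add: run_snoc)
  next
    case (Some p)
    then show ?thesis using snoc.prems(1) that by (simp add: run_snoc)
  qed
  have "s \<noteq> []" using p psi_nonempty by blast
  have "ys \<noteq> []"
  proof
    assume "ys = []"
    then show False using snoc.prems(2) \<open>s \<noteq> []\<close> by (simp add: run_Nil)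
  qed
  then obtain ys' y where ys: "ys = ys' @ [y]" by (cases ys rule: rev_cases) auto
  obtain q where q: "run ys' = Some q" "psi y q = Some s"
  proof (cases "run ys'")
    case None
    then show ?thesis using snoc.prems(2) ys by (simp add: run_snoc)
  next
    case (Some q)
    then show ?thesis using snoc.prems(2) ys that by (simp add: run_snoc)
  qed
  have "(x, p) = (y, q)" using dec_psi[OF p(2)] dec_psi[OF q(2)] by simp
  then show ?case using snoc.IH[OF p(1)] q ys by simp
qed

lemma length_rm: "k < length xs \<Longrightarrow> length (rm k xs) = length xs - 1"
  unfolding rm_def by simp

lemma nth_rm: "k < length xs \<Longrightarrow> i < length xs - 1 \<Longrightarrow>
    rm k xs ! i = xs ! (if i < k then i else Suc i)"
  unfolding rm_def by (auto simp: nth_append min_def)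

lemma rm_decomp: "k < length xs \<Longrightarrow> xs = take k (rm k xs) @ xs ! k # drop k (rm k xs)"
  unfolding rm_def by (simp add: id_take_nth_drop min_def)

lemma rm_dist: assumes "distinct xs" "k < length xs"
  shows "distinct (rm k xs)" "set (rm k xs) = set xs - {xs ! k}"
proof -
  define A where "A = take k xs"
  define B where "B = drop (Suc k) xs"
  have x: "xs = A @ xs ! k # B" unfolding A_def B_def using assms(2) by (rule id_take_nth_drop)
  have r: "rm k xs = A @ B" unfolding rm_def A_def B_def ..
  have d: "distinct (A @ xs ! k # B)" using assms(1) x by simp
  then show "distinct (rm k xs)" unfolding r by simp
  have "set xs = set A \<union> {xs ! k} \<union> set B" using x by (metis Un_insert_right set_append set_simps(2) sup_bot_right Un_insert_left)
  then show "set (rm k xs) = set xs - {xs ! k}" unfolding r using d by auto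
qed

lemma fdn_mono: "x \<noteq> v \<Longrightarrow> y \<noteq> v \<Longrightarrow> (fdn v x < fdn v y) = (x < y)"
  unfolding fdn_def by auto

lemma fdn_range: "x \<noteq> v \<Longrightarrow> 1 \<le> x \<Longrightarrow> x \<le> n \<Longrightarrow> 1 \<le> v \<Longrightarrow> v \<le> n
   \<Longrightarrow> 1 \<le> fdn v x \<and> fdn v x \<le> n - 1"
  unfolding fdn_def by auto

lemma fdn_inj: "x \<noteq> v \<Longrightarrow> y \<noteq> v \<Longrightarrow> fdn v x = fdn v y \<Longrightarrow> x = y"
  unfolding fdn_def by (simp split: if_splits)

lemma perm_rm: assumes "is_perm p" "k < length p"
  shows "is_perm (unsh (p ! k) (rm k p))"
proof -
  let ?v = "p ! k"
  have dp: "distinct p" using assms(1) unfolding is_perm_def by blast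
  have vin: "?v \<in> set p" using assms(2) by simp
  have v: "?v \<ge> 1" "?v \<le> length p" using perm_nz[OF assms(1) vin] by auto
  note rd = rm_dist[OF dp assms(2)]
  have inj: "inj_on (fdn ?v) (set (rm k p))"
  proof (rule inj_onI)
    fix x y assume "x \<in> set (rm k p)" "y \<in> set (rm k p)" "fdn ?v x = fdn ?v y"
    then show "x = y" using rd(2) fdn_inj by blast
  qed
  have d: "distinct (unsh ?v (rm k p))"
    unfolding unsh_def distinct_map using inj rd(1) by blast
  have l: "length (unsh ?v (rm k p)) = length p - 1"
    unfolding unsh_def using length_rm[OF assms(2)] by simp
  have sub: "set (unsh ?v (rm k p)) \<subseteq> {1..length p - 1}"
  proof
    fix y assume "y \<in> set (unsh ?v (rm k p))"
    then obtain x where x: "x \<in> set (rm k p)" "y = fdn ?v x" unfolding unsh_def by auto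
    then have xp: "x \<in> set p" "x \<noteq> ?v" using rd(2) by auto
    then have "x \<ge> 1" "x \<le> length p" using perm_nz[OF assms(1)] by auto
    then show "y \<in> {1..length p - 1}" using x(2) xp(2) v fdn_range by simp
  qed
  have c: "card (set (unsh ?v (rm k p))) = card {1..length p - 1}"
    using distinct_card[OF d] l by simp
  have "set (unsh ?v (rm k p)) = {1..length p - 1}"
    using card_subset_eq[OF _ sub c] by simp
  then show ?thesis unfolding is_perm_def using d l by simp
qed

lemma contains_rm: assumes "distinct p" "k < length p" "contains (unsh (p ! k) (rm k p)) q"
  shows "contains p q"
proof -
  let ?v = "p ! k" and ?r = "unsh (p ! k) (rm k p)"
  define g where "g i = (if i < k then i else Suc i)" for i :: nat
  obtain idx where idx: "length idx = length q" "sorted_wrt (<) idx" "\<forall>i\<in>set idx. i < length ?r"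
    "\<forall>a<length q. \<forall>b<length q. (?r ! (idx ! a) < ?r ! (idx ! b)) = (q ! a < q ! b)"
    using assms(3) unfolding contains_def by blast
  have lr: "length ?r = length p - 1" unfolding unsh_def using length_rm assms(2) by simp
  have rn: "?r ! i = fdn ?v (p ! g i)" "p ! g i \<noteq> ?v" "g i < length p" if "i < length p - 1" for i
  proof -
    show "?r ! i = fdn ?v (p ! g i)" unfolding unsh_def g_def using that lr nth_rm[OF assms(2) that] length_rm[OF assms(2)]
      by (simp add: nth_map)
    show "g i < length p" using that unfolding g_def by auto
    moreover have "g i \<noteq> k" unfolding g_def by auto
    ultimately show "p ! g i \<noteq> ?v" using assms(1,2) nth_eq_iff_index_eq by metis
  qed
  have gm: "i < j \<Longrightarrow> g i < g j" for i j unfolding g_def by auto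
  show ?thesis unfolding contains_def
  proof (intro exI[of _ "map g idx"] conjI ballI allI impI)
    show "length (map g idx) = length q" using idx by simp
    show "sorted_wrt (<) (map g idx)" unfolding sorted_wrt_map
      using sorted_wrt_mono_rel[of idx "(<)" "\<lambda>x y. g x < g y"] idx(2) gm by blast
    show "i < length p" if "i \<in> set (map g idx)" for i using that idx(3) rn(3) lr by auto
    fix a b assume ab: "a < length q" "b < length q"
    then have "idx ! a < length p - 1" "idx ! b < length p - 1" using idx(1,3) lr nth_mem by metis+
    then have e: "?r ! (idx ! a) = fdn ?v (p ! g (idx ! a))" "?r ! (idx ! b) = fdn ?v (p ! g (idx ! b))"
      "p ! g (idx ! a) \<noteq> ?v" "p ! g (idx ! b) \<noteq> ?v" using rn by auto
    have "(?r ! (idx ! a) < ?r ! (idx ! b)) = (q ! a < q ! b)" using idx(4) ab by blast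
    then show "(p ! (map g idx ! a) < p ! (map g idx ! b)) = (q ! a < q ! b)"
      using e fdn_mono[OF e(3,4)] ab idx(1) by simp
  qed
qed

lemma rect_rm: assumes "rectangular p" "k < length p"
  shows "rectangular (unsh (p ! k) (rm k p))"
proof -
  have "is_perm p" using assms(1) by (rule rect_perm)
  then have d: "distinct p" by (simp add: is_perm_def)
  have "avoids (unsh (p ! k) (rm k p)) q" if "avoids p q" for q
    using that contains_rm[OF d assms(2)] unfolding avoids_def by blast
  moreover have "is_perm (unsh (p ! k) (rm k p))" using perm_rm[OF \<open>is_perm p\<close> assms(2)] .
  moreover note r = assms(1)[unfolded rectangular_def]
  ultimately show ?thesis unfolding rectangular_def by (intro conjI) (simp_all only: r)
qed

lemma rho_rm: assumes "distinct p" "k < length p"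
  shows "rho (p ! k) (k + 1) (unsh (p ! k) (rm k p)) = p"
proof -
  have "map (shf (p ! k)) (unsh (p ! k) (rm k p)) = rm k p"
    using shf_unsh rm_dist[OF assms] by simp
  then show ?thesis using rm_decomp[OF assms(2)] by (simp add: rho_eq)
qed

lemma all_less_4: "(\<forall>a<(4::nat). P a) = (P 0 \<and> P 1 \<and> P 2 \<and> P 3)"
  by (auto simp: eval_nat_numeral less_Suc_eq)

lemma contains_I4:
  assumes "i0 < i1" "i1 < i2" "i2 < i3" "i3 < length p" "length q = 4"
    "\<forall>a<4. \<forall>b<4. (p ! ([i0,i1,i2,i3] ! a) < p ! ([i0,i1,i2,i3] ! b)) = (q ! a < q ! b)"
  shows "contains p q"
  unfolding contains_def
  apply (rule exI[of _ "[i0,i1,i2,i3]"])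
  using assms by auto

lemma pat_2413: "i0 < i1 \<Longrightarrow> i1 < i2 \<Longrightarrow> i2 < i3 \<Longrightarrow> i3 < length p \<Longrightarrow>
  p!i2 < p!i0 \<Longrightarrow> p!i0 < p!i3 \<Longrightarrow> p!i3 < p!i1 \<Longrightarrow> contains p [2,4,1,3]"
  by (rule contains_I4) (auto simp: all_less_4)

lemma pat_2431: "i0 < i1 \<Longrightarrow> i1 < i2 \<Longrightarrow> i2 < i3 \<Longrightarrow> i3 < length p \<Longrightarrow>
  p!i3 < p!i0 \<Longrightarrow> p!i0 < p!i2 \<Longrightarrow> p!i2 < p!i1 \<Longrightarrow> contains p [2,4,3,1]"
  by (rule contains_I4) (auto simp: all_less_4)

lemma pat_4213: "i0 < i1 \<Longrightarrow> i1 < i2 \<Longrightarrow> i2 < i3 \<Longrightarrow> i3 < length p \<Longrightarrow>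
  p!i2 < p!i1 \<Longrightarrow> p!i1 < p!i3 \<Longrightarrow> p!i3 < p!i0 \<Longrightarrow> contains p [4,2,1,3]"
  by (rule contains_I4) (auto simp: all_less_4)

lemma pat_4231: "i0 < i1 \<Longrightarrow> i1 < i2 \<Longrightarrow> i2 < i3 \<Longrightarrow> i3 < length p \<Longrightarrow>
  p!i3 < p!i1 \<Longrightarrow> p!i1 < p!i2 \<Longrightarrow> p!i2 < p!i0 \<Longrightarrow> contains p [4,2,3,1]"
  by (rule contains_I4) (auto simp: all_less_4)

lemma perm_mem: "is_perm p \<Longrightarrow> 1 \<le> c \<Longrightarrow> c \<le> length p \<Longrightarrow> \<exists>j<length p. p ! j = c"
  unfolding is_perm_def by (metis atLeastAtMost_iff in_set_conv_nth)

lemma structural: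
  assumes r: "rectangular p" and l: "2 \<le> length p" and h0: "p ! 0 \<noteq> 1" and h1: "p ! 1 \<noteq> 1"
  shows "p ! 1 = p ! 0 + 1 \<or> p ! 1 + 1 = p ! 0"
proof (rule ccontr)
  assume na: "\<not> (p ! 1 = p ! 0 + 1 \<or> p ! 1 + 1 = p ! 0)"
  have P: "is_perm p" using r by (rule rect_perm)
  have dp: "distinct p" using P unfolding is_perm_def by blast
  have ne: "p ! 0 \<noteq> p ! 1" using dp l nth_eq_iff_index_eq by fastforce
  have r0: "1 \<le> p ! 0 \<and> p ! 0 \<le> length p" using perm_nz[OF P, of "p ! 0"] l nth_mem[of 0 p] by fastforce
  have r1: "1 \<le> p ! 1 \<and> p ! 1 \<le> length p" using perm_nz[OF P, of "p ! 1"] l nth_mem[of 1 p] by fastforce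
  define c where "c = min (p ! 0) (p ! 1) + 1"
  have cb: "min (p ! 0) (p ! 1) < c" "c < max (p ! 0) (p ! 1)"
    using na ne unfolding c_def by auto
  have "c \<le> length p" "1 \<le> c" using cb r0 r1 by auto
  then obtain j where j: "j < length p" "p ! j = c" using perm_mem[OF P, of c] by blast
  obtain i where i: "i < length p" "p ! i = 1" using perm_mem[OF P, of 1] l by auto
  have j2: "j \<ge> 2" using j cb by (cases j; cases "j - 1"; auto)
  have i2: "i \<ge> 2" using i h0 h1 by (cases i; cases "i - 1"; auto)
  have "i \<noteq> j" using i j cb r0 r1 by auto
  have c1: "1 < c" using cb r0 r1 by auto
  have ra: "avoids p [2,4,1,3]" "avoids p [2,4,3,1]" "avoids p [4,2,1,3]" "avoids p [4,2,3,1]"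
    using r unfolding rectangular_def by auto
  show False
  proof (cases "p ! 0 < p ! 1")
    case True
    show False
    proof (cases "i < j")
      case True
      then show False using pat_2413[of 0 1 i j p] ra(1) i j i2 cb \<open>p ! 0 < p ! 1\<close> r0 r1 h0
        unfolding avoids_def by auto
    next
      case False
      then show False using pat_2431[of 0 1 j i p] ra(2) i j j2 \<open>i \<noteq> j\<close> cb \<open>p ! 0 < p ! 1\<close> r0 r1 h0
        unfolding avoids_def by auto
    qed
  next
    case False
    then have lt: "p ! 1 < p ! 0" using ne by auto
    show False
    proof (cases "i < j")
      case True
      then show False using pat_4213[of 0 1 i j p] ra(3) i j i2 cb lt r0 r1 h1
        unfolding avoids_def by auto
    next
      case False
      then show False using pat_4231[of 0 1 j i p] ra(4) i j j2 \<open>i \<noteq> j\<close> cb lt r0 r1 h1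
        unfolding avoids_def by auto
    qed
  qed
qed

lemma run_exists: "rectangular p \<Longrightarrow> \<exists>xs. run xs = Some p"
proof (induction "length p" arbitrary: p rule: less_induct)
  case less
  show ?case
  proof (cases "p = []")
    case True
    then show ?thesis using run_Nil by blast
  next
    case False
    then have lp: "0 < length p" by simp
    have P: "is_perm p" using less.prems by (rule rect_perm)
    have dp: "distinct p" using P unfolding is_perm_def by blast
    have hd: "hd p = p ! 0" using False by (simp add: hd_conv_nth)
    have r0: "1 \<le> p ! 0 \<and> p ! 0 \<le> length p" using perm_nz[OF P, of "p ! 0"] lp nth_mem[of 0 p] by fastforce
    have step: "\<exists>xs. run xs = Some p" if k: "k < length p" and ps: "psi x (unsh (p ! k) (rm k p)) = Some p" for k x
    proof -
      let ?q = "unsh (p ! k) (rm k p)"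
      have "length ?q < length p" unfolding unsh_def using length_rm[OF k] lp by simp
      moreover have "rectangular ?q" using rect_rm[OF less.prems k] .
      ultimately obtain xs where "run xs = Some ?q" using less.hyps by blast
      then have "run (xs @ [x]) = Some p" using ps by (simp add: run_snoc)
      then show ?thesis by blast
    qed
    have rq: "rectangular (unsh (p ! k) (rm k p))" if "k < length p" for k
      using rect_rm[OF less.prems that] .
    have rho: "rho (p ! k) (k + 1) (unsh (p ! k) (rm k p)) = p" if "k < length p" for k
      using rho_rm[OF dp that] .
    show ?thesis
    proof (cases "p ! 0 = 1")
      case True
      have "psi L1 (unsh (p ! 0) (rm 0 p)) = Some p"
        using rq[OF lp] rho[OF lp] True by simp
      then show ?thesis using step[OF lp] by blast
    next
      case h0: False
      have l2: "2 \<le> length p"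
      proof (rule ccontr)
        assume "\<not> 2 \<le> length p"
        then have "length p = 1" using lp by linarith
        then show False using r0 h0 by simp
      qed
      then have l1: "1 < length p" by simp
      have r1: "1 \<le> p ! 1 \<and> p ! 1 \<le> length p" using perm_nz[OF P, of "p ! 1"] l1 nth_mem[of 1 p] by fastforce
      define q0 where "q0 = unsh (p ! 0) (rm 0 p)"
      have lq0: "length q0 = length p - 1" unfolding q0_def unsh_def using length_rm[OF lp] by simp
      have q00: "q0 ! 0 = fdn (p ! 0) (p ! 1)" unfolding q0_def unsh_def
        using nth_rm[OF lp, of 0] lq0 l2 length_rm[OF lp] by simp
      have q0ne: "q0 \<noteq> []" using lq0 l2 by auto
      then have hq0: "hd q0 = q0 ! 0" by (simp add: hd_conv_nth)
      show ?thesis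
      proof (cases "p ! 1 = p ! 0 + 1")
        case True
        then have "hd q0 = p ! 0" using hq0 q00 by (simp add: fdn_def)
        then have "psi Lu q0 = Some p"
          using rq[OF lp] rho[OF lp] h0 q0ne unfolding q0_def by simp
        then show ?thesis using step[OF lp] unfolding q0_def by blast
      next
        case nu: False
        show ?thesis
        proof (cases "p ! 1 + 1 = p ! 0")
          case True
          then have "hd q0 + 1 = p ! 0" using hq0 q00 by (simp add: fdn_def)
          then have "psi Ld q0 = Some p"
            using rq[OF lp] rho[OF lp] q0ne unfolding q0_def by simp
          then show ?thesis using step[OF lp] unfolding q0_def by blast
        next
          case nd: False
          have h1: "p ! 1 = 1" using structural[OF less.prems l2 h0] nu nd by blast
          define q1 where "q1 = unsh (p ! 1) (rm 1 p)"
          have lq1: "length q1 = length p - 1" unfolding q1_def unsh_def using length_rm[OF l1] by simp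
          have q10: "q1 ! 0 = fdn (p ! 1) (p ! 0)" unfolding q1_def unsh_def
            using nth_rm[OF l1, of 0] lq1 l2 length_rm[OF l1] by simp
          have q1ne: "q1 \<noteq> []" using lq1 l2 by auto
          have "p ! 0 \<noteq> 2" using nd h1 by simp
          then have "hd q1 \<noteq> 1" using q10 h1 h0 r0 q1ne by (simp add: hd_conv_nth fdn_def)
          then have "psi L2 q1 = Some p"
            using rq[OF l1] rho[OF l1] q1ne h1 unfolding q1_def by (simp add: numeral_2_eq_2)
          then show ?thesis using step[OF l1] unfolding q1_def by blast
        qed
      qed
    qed
  qed
qed

theorem corollary4p3:
  fixes \<pi> :: "nat list"
  assumes "rectangular \<pi>"
  shows "\<exists>!xs :: letter list. run xs = Some \<pi>"
  using run_exists[OF assms] run_unique by blast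

end
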